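(* Let $s_\varepsilon$ and $s$ be as defined below. Then $s_\varepsilon\to s$ as $\varepsilon\to0$, uniformly on compact subsets of $\mathbb{R}^4$.
   Context: Strict delta net: a net $(\delta_\varepsilon)_{\varepsilon\in(0,1]}$ of smooth compactly supported functions on $\mathbb{R}$ with $\operatorname{supp}\delta_\varepsilon\subseteq[-\varepsilon,\varepsilon]$, $\int\delta_\varepsilon\to1$ as $\varepsilon\to0$, and $\int|\delta_\varepsilon|\le C$ for some $C>0$ and small $\varepsilon$. Fix $f\in C^\infty(\mathbb{R}^2,\mathbb{R})$ and a strict delta net $(\delta_\varepsilon)_\varepsilon$; write $X=(X^1,X^2)$. Let $(x_\varepsilon)_\varepsilon=(x_\varepsilon^1,x_\varepsilon^2)_\varepsilon\in C^\infty(\mathbb{R}^2\times\mathbb{R},\mathbb{R}^2)^{(0,1]}$ be a fixed net such that for every compact $K\subseteq\mathbb{R}^2$ there is $\varepsilon_K$ such that for all $X\in K$ and $\varepsilon\le\varepsilon_K$, $U\mapsto x_\varepsilon(X,U)$ is the solution on all of $\mathbb{R}$ of $\partial_U^2x_\varepsilon^i(X,U)=\frac12\partial_if(x_\varepsilon(X,U))\,\delta_\varepsilon(U)$, $x_\varepsilon^i(X,-1)=X^i$, $\partial_Ux_\varepsilon^i(X,-1)=0$ ($i=1,2$). Write $\dot x_\varepsilon^i=\partial_U x_\varepsilon^i$ and define $$w_\varepsilon(X,V,U)=V+\int_{-\varepsilon}^U\int_{-\varepsilon}^s\sum_{i=1}^2\partial_if(x_\varepsilon(X,r))\,\dot x_\varepsilon^i(X,r)\,\delta_\varepsilon(r)\,dr\,ds,$$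 $s_\varepsilon(U,X^1,X^2,V)=(U,x_\varepsilon^1(X,U),x_\varepsilon^2(X,U),w_\varepsilon(X,V,U))$. With $U_+=\max(U,0)$, let $x^i(X,U)=X^i+\frac12\partial_if(X)U_+$, $w(X,V,U)=V+\frac14\sum_{i=1}^2(\partial_if(X))^2U_+$ and $s(U,X^1,X^2,V)=(U,x^1(X,U),x^2(X,U),w(X,V,U))$. *)

theory Defs
  imports "HOL-Analysis.Analysis"
begin

coinductive smooth :: "('a::euclidean_space \<Rightarrow> 'b::real_normed_vector) \<Rightarrow> bool" where
  "(\<forall>x. g differentiable (at x)) \<Longrightarrow>
   (\<forall>b\<in>Basis. smooth (\<lambda>x. frechet_derivative g (at x) b)) \<Longrightarrow> smooth g"

definition partial1 :: "(real \<times> real \<Rightarrow> real) \<Rightarrow> real \<times> real \<Rightarrow> real" where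
  "partial1 f p = deriv (\<lambda>t. f (t, snd p)) (fst p)"

definition partial2 :: "(real \<times> real \<Rightarrow> real) \<Rightarrow> real \<times> real \<Rightarrow> real" where
  "partial2 f p = deriv (\<lambda>t. f (fst p, t)) (snd p)"

definition oint :: "real \<Rightarrow> real \<Rightarrow> (real \<Rightarrow> real) \<Rightarrow> real" where
  "oint a b g = (if a \<le> b then integral {a..b} g else - integral {b..a} g)"

definition strict_delta_net :: "(real \<Rightarrow> real \<Rightarrow> real) \<Rightarrow> bool" where
  "strict_delta_net \<delta> \<longleftrightarrow>
     (\<forall>\<epsilon>\<in>{0<..1}. smooth (\<delta> \<epsilon>) \<and> (\<forall>u. \<delta> \<epsilon> u \<noteq> 0 \<longrightarrow> u \<in> {-\<epsilon>..\<epsilon>})) \<and>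
     ((\<lambda>\<epsilon>. integral {-\<epsilon>..\<epsilon>} (\<delta> \<epsilon>)) \<longlongrightarrow> 1) (at_right 0) \<and>
     (\<exists>C>0. \<forall>\<^sub>F \<epsilon> in at_right 0. integral {-\<epsilon>..\<epsilon>} (\<lambda>u. \<bar>\<delta> \<epsilon> u\<bar>) \<le> C)"

definition w_eps :: "(real \<times> real \<Rightarrow> real) \<Rightarrow> (real \<Rightarrow> real \<Rightarrow> real)
    \<Rightarrow> (real \<Rightarrow> real \<times> real \<Rightarrow> real \<Rightarrow> real \<times> real) \<Rightarrow> real \<Rightarrow> real \<times> real \<Rightarrow> real \<Rightarrow> real \<Rightarrow> real" where
  "w_eps f \<delta> x \<epsilon> X V U = V + oint (-\<epsilon>) U (\<lambda>s. oint (-\<epsilon>) s (\<lambda>r.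
      (partial1 f (x \<epsilon> X r) * fst (vector_derivative (x \<epsilon> X) (at r))
     + partial2 f (x \<epsilon> X r) * snd (vector_derivative (x \<epsilon> X) (at r))) * \<delta> \<epsilon> r))"

definition s_eps :: "(real \<times> real \<Rightarrow> real) \<Rightarrow> (real \<Rightarrow> real \<Rightarrow> real)
    \<Rightarrow> (real \<Rightarrow> real \<times> real \<Rightarrow> real \<Rightarrow> real \<times> real) \<Rightarrow> real
    \<Rightarrow> real \<times> real \<times> real \<times> real \<Rightarrow> real \<times> real \<times> real \<times> real" where
  "s_eps f \<delta> x \<epsilon> p = (case p of (U, X1, X2, V) \<Rightarrow>
      (U, fst (x \<epsilon> (X1, X2) U), snd (x \<epsilon> (X1, X2) U), w_eps f \<delta> x \<epsilon> (X1, X2) V U))"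

definition s_lim :: "(real \<times> real \<Rightarrow> real)
    \<Rightarrow> real \<times> real \<times> real \<times> real \<Rightarrow> real \<times> real \<times> real \<times> real" where
  "s_lim f p = (case p of (U, X1, X2, V) \<Rightarrow>
      (U, X1 + 1/2 * partial1 f (X1, X2) * max U 0,
          X2 + 1/2 * partial2 f (X1, X2) * max U 0,
          V + 1/4 * ((partial1 f (X1, X2))\<^sup>2 + (partial2 f (X1, X2))\<^sup>2) * max U 0))"

end

theory Submission
  imports Defs
begin


lemma smooth_cont: "smooth h \<Longrightarrow> continuous_on UNIV h"
  by (erule smooth.cases) (metis differentiable_imp_continuous_on differentiable_on_def)

lemma partial1_eq:
  assumes "f differentiable (at p)"
  shows "partial1 f p = frechet_derivative f (at p) (1,0)"
proof -
  let ?D = "frechet_derivative f (at p)"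
  have fd: "(f has_derivative ?D) (at p)" using assms frechet_derivative_works by blast
  have lin: "linear ?D" using fd has_derivative_linear by blast
  have "((\<lambda>t. (t, snd p)) has_derivative (\<lambda>h. (h, 0))) (at (fst p))"
    by (auto intro!: derivative_eq_intros)
  from has_derivative_compose[OF this, of f ?D] fd
  have "((\<lambda>t. f (t, snd p)) has_derivative (\<lambda>h. ?D (h,0))) (at (fst p))" by simp
  moreover have "(\<lambda>h. ?D (h,0)) = (\<lambda>h. h * ?D (1,0))"
  proof
    fix h :: real
    have "?D (h,0) = ?D (h *\<^sub>R (1,0))" by simp
    also have "\<dots> = h * ?D (1,0)" using linear_scale[OF lin, of h "(1,0)"] by simp
    finally show "?D (h,0) = h * ?D (1,0)" .
  qed
  ultimately have "((\<lambda>t. f (t, snd p)) has_field_derivative ?D (1,0)) (at (fst p))"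
    by (simp add: has_field_derivative_def mult.commute[of _ "frechet_derivative f (at p) _"])
  thus ?thesis unfolding partial1_def by (rule DERIV_imp_deriv)
qed

lemma partial2_eq:
  assumes "f differentiable (at p)"
  shows "partial2 f p = frechet_derivative f (at p) (0,1)"
proof -
  let ?D = "frechet_derivative f (at p)"
  have fd: "(f has_derivative ?D) (at p)" using assms frechet_derivative_works by blast
  have lin: "linear ?D" using fd has_derivative_linear by blast
  have "((\<lambda>t. (fst p, t)) has_derivative (\<lambda>h. (0, h))) (at (snd p))"
    by (auto intro!: derivative_eq_intros)
  from has_derivative_compose[OF this, of f ?D] fd
  have "((\<lambda>t. f (fst p, t)) has_derivative (\<lambda>h. ?D (0,h))) (at (snd p))" by simp
  moreover have "(\<lambda>h. ?D (0,h)) = (\<lambda>h. h * ?D (0,1))"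
  proof
    fix h :: real
    have "?D (0,h) = ?D (h *\<^sub>R (0,1))" by simp
    also have "\<dots> = h * ?D (0,1)" using linear_scale[OF lin, of h "(0,1)"] by simp
    finally show "?D (0,h) = h * ?D (0,1)" .
  qed
  ultimately have "((\<lambda>t. f (fst p, t)) has_field_derivative ?D (0,1)) (at (snd p))"
    by (simp add: has_field_derivative_def mult.commute[of _ "frechet_derivative f (at p) _"])
  thus ?thesis unfolding partial2_def by (rule DERIV_imp_deriv)
qed

lemma smooth_partials_cont:
  fixes f :: "real \<times> real \<Rightarrow> real"
  assumes "smooth f"
  shows "continuous_on UNIV (\<lambda>y. (partial1 f y, partial2 f y))"
proof -
  from assms have d: "\<forall>x. f differentiable (at x)"
    and s: "\<forall>b\<in>Basis. smooth (\<lambda>x. frechet_derivative f (at x) b)"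
    by (auto elim: smooth.cases)
  have b1: "(1::real,0::real) \<in> Basis" and b2: "(0::real,1::real) \<in> Basis"
    by (auto simp: Basis_prod_def)
  have c1: "continuous_on UNIV (\<lambda>x. frechet_derivative f (at x) (1,0))"
    using s b1 smooth_cont by blast
  have c2: "continuous_on UNIV (\<lambda>x. frechet_derivative f (at x) (0,1))"
    using s b2 smooth_cont by blast
  have eq: "(\<lambda>y. (partial1 f y, partial2 f y)) = (\<lambda>y. (frechet_derivative f (at y) (1,0), frechet_derivative f (at y) (0,1)))"
    using d partial1_eq partial2_eq by auto
  show ?thesis by (subst eq) (rule continuous_on_Pair[OF c1 c2])
qed



lemma vd_zero_const:
  fixes h :: "real \<Rightarrow> 'b::real_normed_vector"
  assumes "convex S" "\<And>u. u\<in>S \<Longrightarrow> (h has_vector_derivative 0) (at u)" "a\<in>S" "b\<in>S"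
  shows "h a = h b"
proof -
  have "\<exists>c. \<forall>x\<in>S. h x = c"
    apply (rule has_derivative_zero_constant[OF assms(1)])
    using assms(2) unfolding has_vector_derivative_def
    by (simp add: has_derivative_at_withinI)
  thus ?thesis using assms(3,4) by metis
qed

lemma oint_ftc:
  fixes Q q :: "real \<Rightarrow> real"
  assumes "\<And>r. (Q has_real_derivative q r) (at r)"
  shows "oint a b q = Q b - Q a"
proof (cases "a \<le> b")
  case True
  have "(q has_integral (Q b - Q a)) {a..b}"
    by (rule fundamental_theorem_of_calculus[OF True])
       (use assms in \<open>auto simp: has_real_derivative_iff_has_vector_derivative[symmetric]
          intro: has_field_derivative_at_within\<close>)
  thus ?thesis using True unfolding oint_def by (simp add: integral_unique)
next
  case False
  have "(q has_integral (Q a - Q b)) {b..a}"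
    by (rule fundamental_theorem_of_calculus) (use assms False in
        \<open>auto simp: has_real_derivative_iff_has_vector_derivative[symmetric]
          intro: has_field_derivative_at_within\<close>)
  thus ?thesis using False unfolding oint_def by (simp add: integral_unique)
qed

lemma int_abs_bound:
  fixes Q :: "real \<Rightarrow> real"
  assumes "continuous_on UNIV Q" "\<And>s. \<bar>Q s\<bar> \<le> R" "a \<le> b"
  shows "\<bar>integral {a..b} Q\<bar> \<le> R * (b - a)"
proof -
  have R: "0 \<le> R" using assms(2)[of 0] by linarith
  have "(Q has_integral integral {a..b} Q) (cbox a b)"
    using integrable_continuous_interval[OF continuous_on_subset[OF assms(1)]] by auto
  from has_integral_bound[OF R this] assms(2)
  have "norm (integral {a..b} Q) \<le> R * measure lborel (cbox a b)" by auto
  thus ?thesis using assms(3) by (simp add: content_real)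
qed

lemma oint_est:
  fixes Q :: "real \<Rightarrow> real"
  assumes cQ: "continuous_on UNIV Q" and e: "0 < e"
    and l: "\<And>s. s \<le> -e \<Longrightarrow> Q s = 0" and r: "\<And>s. e \<le> s \<Longrightarrow> Q s = c"
    and R: "\<And>s. \<bar>Q s\<bar> \<le> R"
  shows "\<bar>oint (-e) U Q - c * max U 0\<bar> \<le> 2 * e * R + e * \<bar>c\<bar>"
proof -
  have R0: "0 \<le> R" using R[of 0] by linarith
  have ce: "\<bar>c\<bar> \<le> R" using R[of e] r[of e] by simp
  consider "U < -e" | "U = -e" | "-e < U" "U \<le> e" | "e < U" by linarith
  then show ?thesis
  proof cases
    case 1
    have "integral {U..-e} Q = integral {U..-e} (\<lambda>_. 0)"
      by (rule integral_cong) (use l in auto)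
    hence "oint (-e) U Q = 0" using 1 unfolding oint_def by simp
    thus ?thesis using 1 e R0 by simp
  next
    case 2
    hence "oint (-e) U Q = 0" unfolding oint_def by simp
    thus ?thesis using 2 e R0 by simp
  next
    case 3
    have "\<bar>integral {-e..U} Q\<bar> \<le> R * (U - -e)" by (rule int_abs_bound[OF cQ R]) (use 3 in auto)
    also have "\<dots> \<le> R * (2 * e)" using 3 R0 by (intro mult_left_mono) auto
    finally have a: "\<bar>oint (-e) U Q\<bar> \<le> 2 * e * R" using 3 unfolding oint_def by (simp add: mult_ac)
    have "\<bar>c * max U 0\<bar> \<le> \<bar>c\<bar> * e" using 3 e
      by (simp add: abs_mult) (intro mult_left_mono, auto)
    thus ?thesis using a by (simp add: mult.commute)
  next
    case 4
    have int: "Q integrable_on {-e..U}"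
      by (rule integrable_continuous_interval[OF continuous_on_subset[OF cQ]]) auto
    have "integral {-e..e} Q + integral {e..U} Q = integral {-e..U} Q"
      by (rule Henstock_Kurzweil_Integration.integral_combine) (use 4 e int in auto)
    moreover have "integral {e..U} Q = integral {e..U} (\<lambda>_. c)"
      by (rule integral_cong) (use r in auto)
    moreover have "integral {e..U} (\<lambda>_. c) = (U - e) * c" using 4 by (simp add: content_real)
    moreover have "\<bar>integral {-e..e} Q\<bar> \<le> R * (e - -e)" by (rule int_abs_bound[OF cQ R]) (use e in auto)
    ultimately have o: "oint (-e) U Q = integral {-e..e} Q + (U - e) * c"
      and b: "\<bar>integral {-e..e} Q\<bar> \<le> R * (2 * e)" using 4 e unfolding oint_def by auto
    have m: "max U 0 = U" using 4 e by simp
    have "oint (-e) U Q - c * max U 0 = integral {-e..e} Q - e * c"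
      unfolding o m by (simp add: algebra_simps)
    moreover have "\<bar>e * c\<bar> = e * \<bar>c\<bar>" using e by (simp add: abs_mult)
    ultimately show ?thesis using b by (simp add: algebra_simps)
  qed
qed

locale odeset =
  fixes x xd :: "real \<Rightarrow> real \<times> real" and d :: "real \<Rightarrow> real"
    and g :: "real \<times> real \<Rightarrow> real \<times> real" and X :: "real \<times> real" and e M C :: real
  assumes xder: "\<And>U. (x has_vector_derivative xd U) (at U)"
    and xdder: "\<And>U. (xd has_vector_derivative (d U / 2) *\<^sub>R g (x U)) (at U)"
    and x0: "x (-1) = X" and xd0: "xd (-1) = 0"
    and epos: "0 < e" and ele: "e \<le> 1"
    and dsupp: "\<And>u. d u \<noteq> 0 \<Longrightarrow> u \<in> {-e..e}"
    and dcont: "continuous_on UNIV d"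
    and gcont: "continuous_on UNIV g"
    and gM: "\<And>y. dist y X \<le> 1 \<Longrightarrow> norm (g y) \<le> M"
    and dC: "integral {-e..e} (\<lambda>u. \<bar>d u\<bar>) \<le> C"
    and small: "e * M * C < 1"
begin

definition "B = M * C / 2"

lemma cx: "continuous_on UNIV x"
  using xder by (meson continuous_at_imp_continuous_on has_vector_derivative_continuous)

lemma cxd: "continuous_on UNIV xd"
  using xdder by (meson continuous_at_imp_continuous_on has_vector_derivative_continuous)

lemma cgx: "continuous_on UNIV (\<lambda>t. g (x t))"
  using continuous_on_compose2[OF gcont cx] by simp

lemma cint: "continuous_on UNIV (\<lambda>t. (d t / 2) *\<^sub>R g (x t))"
  by (intro continuous_intros dcont cgx) auto

lemma Mnn: "0 \<le> M"
proof -
  have "norm (g X) \<le> M" using gM by simp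
  thus ?thesis using norm_ge_zero order_trans by blast
qed

lemma dabs_int: "(\<lambda>u. \<bar>d u\<bar>) integrable_on {a..b}"
  by (intro integrable_continuous_interval continuous_intros continuous_on_subset[OF dcont]) auto

lemma dint: "d integrable_on {a..b}"
  by (intro integrable_continuous_interval continuous_on_subset[OF dcont]) auto

lemma Cnn: "0 \<le> C"
proof -
  have "0 \<le> integral {-e..e} (\<lambda>u. \<bar>d u\<bar>)" by (rule integral_nonneg) (auto intro: dabs_int)
  thus ?thesis using dC by linarith
qed

lemma Bnn: "0 \<le> B" unfolding B_def using Mnn Cnn by simp

lemma dzero: "u \<le> -e \<or> e \<le> u \<Longrightarrow> d u = 0"
proof -
  have cl: "closed {u. d u = 0}"
    using continuous_closed_preimage_constant[OF dcont, of 0] by simp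
  have A: "{..<-e} \<subseteq> {u. d u = 0}" "{e<..} \<subseteq> {u. d u = 0}" using dsupp by force+
  have "closure {..<-e} \<subseteq> {u. d u = 0}" "closure {e<..} \<subseteq> {u. d u = 0}"
    using closure_minimal[OF A(1) cl] closure_minimal[OF A(2) cl] by auto
  moreover assume "u \<le> -e \<or> e \<le> u"
  ultimately show "d u = 0" by auto
qed

lemma xd_left: "s \<le> -e \<Longrightarrow> xd s = 0"
proof -
  assume s: "s \<le> -e"
  have "xd s = xd (-1)"
  proof (rule vd_zero_const[of "{..-e}"])
    fix u assume "u \<in> {..-e}"
    hence "d u = 0" using dzero by auto
    thus "(xd has_vector_derivative 0) (at u)" using xdder[of u] by simp
  qed (use ele s in auto)
  thus ?thesis using xd0 by simp
qed

lemma xd_right: "e \<le> s \<Longrightarrow> xd s = xd e"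
proof (rule vd_zero_const[of "{e..}"])
  fix u assume "u \<in> {e..}"
  hence "d u = 0" using dzero by auto
  thus "(xd has_vector_derivative 0) (at u)" using xdder[of u] by simp
qed auto

lemma x_left: "s \<le> -e \<Longrightarrow> x s = X"
proof -
  assume s: "s \<le> -e"
  have "x s = x (-1)"
  proof (rule vd_zero_const[of "{..-e}"])
    fix u assume "u \<in> {..-e}"
    hence "xd u = 0" using xd_left by auto
    thus "(x has_vector_derivative 0) (at u)" using xder[of u] by simp
  qed (use ele s in auto)
  thus ?thesis using x0 by simp
qed

lemma x_right: "e \<le> s \<Longrightarrow> x s = x e + (s - e) *\<^sub>R xd e"
proof -
  assume s: "e \<le> s"
  have "(\<lambda>t. x t - t *\<^sub>R xd e) s = (\<lambda>t. x t - t *\<^sub>R xd e) e"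
  proof (rule vd_zero_const[of "{e..}" "\<lambda>t. x t - t *\<^sub>R xd e" s e])
    fix u assume "u \<in> {e..}"
    hence "xd u = xd e" using xd_right[of u] by auto
    moreover have "((\<lambda>t. x t - t *\<^sub>R xd e) has_vector_derivative (xd u - (u *\<^sub>R 0 + 1 *\<^sub>R xd e))) (at u)"
      by (rule has_vector_derivative_diff[OF xder has_vector_derivative_scaleR[OF DERIV_ident has_vector_derivative_const]])
    ultimately show "((\<lambda>t. x t - t *\<^sub>R xd e) has_vector_derivative 0) (at u)" by simp
  qed (use s in auto)
  thus ?thesis by (simp add: algebra_simps)
qed

lemma xd_integral: "a \<le> b \<Longrightarrow> ((\<lambda>t. (d t / 2) *\<^sub>R g (x t)) has_integral (xd b - xd a)) {a..b}"
  by (rule fundamental_theorem_of_calculus) (auto intro: has_vector_derivative_at_within xdder)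

lemma x_integral: "a \<le> b \<Longrightarrow> (xd has_integral (x b - x a)) {a..b}"
  by (rule fundamental_theorem_of_calculus) (auto intro: has_vector_derivative_at_within xder)

lemma local_bound:
  assumes t1: "-e \<le> \<tau>" and t2: "\<tau> \<le> e" and near: "\<forall>t\<in>{-e..\<tau>}. dist (x t) X \<le> 1"
  shows "\<forall>s\<in>{-e..\<tau>}. norm (xd s) \<le> B" and "\<forall>s\<in>{-e..\<tau>}. norm (x s - X) \<le> B * (s + e)"
proof -
  have xdb: "norm (xd s) \<le> B" if s: "s \<in> {-e..\<tau>}" for s
  proof -
    have "xd s = integral {-e..s} (\<lambda>t. (d t / 2) *\<^sub>R g (x t))"
      using xd_integral[of "-e" s] xd_left[of "-e"] s by (simp add: integral_unique)
    also have "norm \<dots> \<le> integral {-e..s} (\<lambda>t. M / 2 * \<bar>d t\<bar>)"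
    proof (rule integral_norm_bound_integral)
      show "(\<lambda>t. (d t / 2) *\<^sub>R g (x t)) integrable_on {-e..s}"
        by (intro integrable_continuous_interval continuous_on_subset[OF cint]) auto
      show "(\<lambda>t. M / 2 * \<bar>d t\<bar>) integrable_on {-e..s}"
        by (rule integrable_on_mult_right[OF dabs_int])
      fix t assume t: "t \<in> {-e..s}"
      hence "dist (x t) X \<le> 1" using near s by auto
      hence "norm (g (x t)) \<le> M" using gM by blast
      hence "\<bar>d t\<bar> / 2 * norm (g (x t)) \<le> \<bar>d t\<bar> / 2 * M"
        by (intro mult_left_mono) auto
      thus "norm ((d t / 2) *\<^sub>R g (x t)) \<le> M / 2 * \<bar>d t\<bar>" by (simp add: field_simps)
    qed
    also have "\<dots> = M / 2 * integral {-e..s} (\<lambda>t. \<bar>d t\<bar>)" by simp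
    also have "\<dots> \<le> M / 2 * integral {-e..e} (\<lambda>t. \<bar>d t\<bar>)"
    proof (rule mult_left_mono)
      show "integral {-e..s} (\<lambda>t. \<bar>d t\<bar>) \<le> integral {-e..e} (\<lambda>t. \<bar>d t\<bar>)"
        by (rule integral_subset_le) (use s t2 dabs_int in auto)
    qed (simp add: Mnn)
    also have "\<dots> \<le> M / 2 * C" by (rule mult_left_mono[OF dC]) (simp add: Mnn)
    finally show ?thesis unfolding B_def by simp
  qed
  thus "\<forall>s\<in>{-e..\<tau>}. norm (xd s) \<le> B" by blast
  show "\<forall>s\<in>{-e..\<tau>}. norm (x s - X) \<le> B * (s + e)"
  proof
    fix s assume s: "s \<in> {-e..\<tau>}"
    have "(xd has_integral (x s - X)) (cbox (-e) s)"
      using x_integral[of "-e" s] x_left[of "-e"] s by simp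
    moreover have "\<And>y. y \<in> cbox (-e) s \<Longrightarrow> norm (xd y) \<le> B" using xdb s by simp
    ultimately have "norm (x s - X) \<le> B * measure lborel (cbox (-e) s)"
      by (rule has_integral_bound[OF Bnn])
    thus "norm (x s - X) \<le> B * (s + e)" using s by (simp add: content_real)
  qed
qed

lemma near_all: "\<forall>t\<in>{-e..e}. dist (x t) X \<le> 1"
proof (rule ccontr)
  assume "\<not> ?thesis"
  then obtain t1 where t1: "t1 \<in> {-e..e}" "\<not> dist (x t1) X \<le> 1" by blast
  define S where "S = {-e..e} \<inter> {t. 1 \<le> dist (x t) X}"
  have clS: "closed S" unfolding S_def
    by (intro closed_Int closed_real_atLeastAtMost closed_Collect_le continuous_intros
        continuous_on_subset[OF cx]) auto
  have "t1 \<in> S" using t1 unfolding S_def by auto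
  hence neS: "S \<noteq> {}" by auto
  have bdd: "bdd_below S" unfolding S_def by (rule bdd_belowI[of _ "-e"]) auto
  define t0 where "t0 = Inf S"
  have t0S: "t0 \<in> S" unfolding t0_def by (rule closed_contains_Inf[OF neS bdd clS])
  have t0e: "-e \<le> t0" "t0 \<le> e" using t0S unfolding S_def by auto
  have before: "dist (x t) X < 1" if "t \<in> {-e..<t0}" for t
  proof (rule ccontr)
    assume "\<not> dist (x t) X < 1"
    hence "t \<in> S" using that t0e unfolding S_def by auto
    hence "t0 \<le> t" unfolding t0_def using bdd by (simp add: cInf_lower)
    thus False using that by auto
  qed
  have "x (-e) = X" using x_left by simp
  hence "-e \<notin> S" unfolding S_def by simp
  hence t0gt: "-e < t0" using t0S t0e by (cases "t0 = -e") auto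
  have "isCont x t0" using cx by (simp add: continuous_on_eq_continuous_at)
  moreover have "0 < 1 - e * M * C" using small by simp
  ultimately obtain r where r: "r > 0" "\<And>t. dist t t0 < r \<Longrightarrow> dist (x t) (x t0) < 1 - e * M * C"
    unfolding continuous_at_eps_delta by blast
  define \<tau> where "\<tau> = max (-e) (t0 - r / 2)"
  have tau: "-e \<le> \<tau>" "\<tau> < t0" "\<tau> \<le> e" "dist \<tau> t0 < r"
    using t0gt t0e r(1) unfolding \<tau>_def dist_real_def by auto
  have "\<forall>t\<in>{-e..\<tau>}. dist (x t) X \<le> 1" using before tau by fastforce
  from local_bound(2)[OF tau(1) tau(3) this] tau
  have "norm (x \<tau> - X) \<le> B * (\<tau> + e)" by auto
  also have "\<dots> \<le> B * (2 * e)" using tau Bnn by (intro mult_left_mono) auto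
  also have "\<dots> = e * M * C" unfolding B_def by simp
  finally have a: "dist (x \<tau>) X \<le> e * M * C" by (simp add: dist_norm)
  have b: "dist (x t0) (x \<tau>) < 1 - e * M * C" using r(2)[OF tau(4)] by (simp add: dist_commute)
  have "dist (x t0) X \<le> dist (x t0) (x \<tau>) + dist (x \<tau>) X" by (rule dist_triangle)
  hence "dist (x t0) X < 1" using a b by linarith
  thus False using t0S unfolding S_def by auto
qed

lemma xd_bound: "norm (xd s) \<le> B"
proof -
  have lb: "\<forall>s\<in>{-e..e}. norm (xd s) \<le> B"
    using local_bound(1)[of e] near_all epos by auto
  show ?thesis
  proof (cases "s \<le> -e")
    case True thus ?thesis using xd_left[OF True] Bnn by simp
  next
    case False
    show ?thesis
    proof (cases "e \<le> s")
      case True thus ?thesis using xd_right[OF True] lb epos by auto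
    next
      case False thus ?thesis using lb \<open>\<not> s \<le> -e\<close> by auto
    qed
  qed
qed

lemma x_mid: "t \<in> {-e..e} \<Longrightarrow> norm (x t - X) \<le> 2 * e * B"
proof -
  assume t: "t \<in> {-e..e}"
  have "norm (x t - X) \<le> B * (t + e)"
    using local_bound(2)[of e] near_all epos t by auto
  also have "\<dots> \<le> B * (2 * e)" using t Bnn by (intro mult_left_mono) auto
  finally show ?thesis by (simp add: algebra_simps)
qed

lemma xd_e_close:
  assumes eta: "\<And>y. dist y X \<le> 2 * e * B \<Longrightarrow> norm (g y - g X) \<le> \<eta>"
  shows "norm (xd e - (integral {-e..e} d / 2) *\<^sub>R g X) \<le> \<eta> / 2 * C"
proof -
  have eta0: "0 \<le> \<eta>" using eta[of X] Bnn epos by simp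
  have h1: "((\<lambda>t. (d t / 2) *\<^sub>R g (x t)) has_integral (xd e - xd (-e))) {-e..e}"
    using xd_integral epos by simp
  have h2: "((\<lambda>t. (d t / 2) *\<^sub>R g X) has_integral ((integral {-e..e} d / 2) *\<^sub>R g X)) {-e..e}"
    by (rule has_integral_scaleR_left[OF has_integral_divide[OF integrable_integral[OF dint]]])
  have h3: "((\<lambda>t. (d t / 2) *\<^sub>R g (x t) - (d t / 2) *\<^sub>R g X) has_integral
      (xd e - (integral {-e..e} d / 2) *\<^sub>R g X)) {-e..e}"
    using has_integral_diff[OF h1 h2] xd_left[of "-e"] by simp
  have "norm (xd e - (integral {-e..e} d / 2) *\<^sub>R g X)
      = norm (integral {-e..e} (\<lambda>t. (d t / 2) *\<^sub>R g (x t) - (d t / 2) *\<^sub>R g X))"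
    using h3 by (simp add: integral_unique)
  also have "\<dots> \<le> integral {-e..e} (\<lambda>t. \<eta> / 2 * \<bar>d t\<bar>)"
  proof (rule integral_norm_bound_integral)
    show "(\<lambda>t. (d t / 2) *\<^sub>R g (x t) - (d t / 2) *\<^sub>R g X) integrable_on {-e..e}"
      using h3 by blast
    show "(\<lambda>t. \<eta> / 2 * \<bar>d t\<bar>) integrable_on {-e..e}"
      by (rule integrable_on_mult_right[OF dabs_int])
    fix t assume t: "t \<in> {-e..e}"
    hence "dist (x t) X \<le> 2 * e * B" using x_mid by (simp add: dist_norm)
    hence "norm (g (x t) - g X) \<le> \<eta>" by (rule eta)
    hence le: "\<bar>d t\<bar> / 2 * norm (g (x t) - g X) \<le> \<bar>d t\<bar> / 2 * \<eta>"
      by (intro mult_left_mono) auto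
    have "norm ((d t / 2) *\<^sub>R g (x t) - (d t / 2) *\<^sub>R g X) = norm ((d t / 2) *\<^sub>R (g (x t) - g X))"
      by (simp add: scaleR_diff_right)
    also have "\<dots> = \<bar>d t\<bar> / 2 * norm (g (x t) - g X)" by simp
    also have "\<dots> \<le> \<bar>d t\<bar> / 2 * \<eta>" by (rule le)
    also have "\<dots> = \<eta> / 2 * \<bar>d t\<bar>" by simp
    finally show "norm ((d t / 2) *\<^sub>R g (x t) - (d t / 2) *\<^sub>R g X) \<le> \<eta> / 2 * \<bar>d t\<bar>" .
  qed
  also have "\<dots> = \<eta> / 2 * integral {-e..e} (\<lambda>t. \<bar>d t\<bar>)" by simp
  also have "\<dots> \<le> \<eta> / 2 * C" by (rule mult_left_mono[OF dC]) (simp add: eta0)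
  finally show ?thesis .
qed

lemma x_est: "norm (x U - (X + max U 0 *\<^sub>R h)) \<le> 3 * e * B + \<bar>U\<bar> * norm (xd e - h)"
proof -
  have nh: "norm h \<le> B + norm (xd e - h)"
    using xd_bound[of e] norm_triangle_ineq4[of "xd e" "xd e - h"] by simp
  consider "U \<le> -e" | "-e < U" "U < e" | "e \<le> U" by linarith
  then show ?thesis
  proof cases
    case 1
    have m: "max U 0 = 0" using 1 epos by simp
    have z: "norm (x U - (X + max U 0 *\<^sub>R h)) = 0" unfolding m using x_left[OF 1] by simp
    have "0 \<le> 3 * e * B + \<bar>U\<bar> * norm (xd e - h)" using epos Bnn by simp
    thus ?thesis using z by linarith
  next
    case 2
    have a: "norm (x U - X) \<le> 2 * e * B" using x_mid 2 by simp
    have b: "norm (max U 0 *\<^sub>R h) \<le> e * B + \<bar>U\<bar> * norm (xd e - h)"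
    proof (cases "U \<le> 0")
      case True
      hence m0: "max U 0 = 0" by simp
      have "0 \<le> e * B + \<bar>U\<bar> * norm (xd e - h)" using epos Bnn by simp
      thus ?thesis unfolding m0 by simp
    next
      case False
      hence "norm (max U 0 *\<^sub>R h) = U * norm h" by simp
      also have "\<dots> \<le> U * (B + norm (xd e - h))" using False nh by (intro mult_left_mono) auto
      also have "\<dots> \<le> e * B + \<bar>U\<bar> * norm (xd e - h)"
        using False 2 Bnn by (simp add: algebra_simps mult_right_mono)
      finally show ?thesis .
    qed
    have e2: "x U - (X + max U 0 *\<^sub>R h) = (x U - X) - max U 0 *\<^sub>R h" by simp
    have tri: "norm ((x U - X) - max U 0 *\<^sub>R h) \<le> norm (x U - X) + norm (max U 0 *\<^sub>R h)"
      by (rule norm_triangle_ineq4)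
    show ?thesis unfolding e2 using tri a b by linarith
  next
    case 3
    have m: "max U 0 = U" using 3 epos by simp
    have eq: "x U - (X + max U 0 *\<^sub>R h) = (x e - X) + (U *\<^sub>R (xd e - h) - e *\<^sub>R xd e)"
      unfolding m x_right[OF 3] by (simp add: algebra_simps)
    have t1: "norm ((x e - X) + (U *\<^sub>R (xd e - h) - e *\<^sub>R xd e))
        \<le> norm (x e - X) + norm (U *\<^sub>R (xd e - h) - e *\<^sub>R xd e)" by (rule norm_triangle_ineq)
    have t2: "norm (U *\<^sub>R (xd e - h) - e *\<^sub>R xd e) \<le> norm (U *\<^sub>R (xd e - h)) + norm (e *\<^sub>R xd e)"
      by (rule norm_triangle_ineq4)
    have t3: "norm (U *\<^sub>R (xd e - h)) = \<bar>U\<bar> * norm (xd e - h)" by simp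
    have t4: "norm (e *\<^sub>R xd e) \<le> e * B"
      using xd_bound[of e] epos by (simp add: mult_left_mono)
    have t5: "norm (x e - X) \<le> 2 * e * B" using x_mid[of e] epos by simp
    show ?thesis unfolding eq using t1 t2 t3 t4 t5 by linarith
  qed
qed

definition "Q s = xd s \<bullet> xd s"

lemma Q_deriv:
  "(Q has_real_derivative ((fst (g (x r)) * fst (xd r) + snd (g (x r)) * snd (xd r)) * d r)) (at r)"
proof -
  have "(Q has_vector_derivative (xd r \<bullet> ((d r / 2) *\<^sub>R g (x r)) + ((d r / 2) *\<^sub>R g (x r)) \<bullet> xd r)) (at r)"
    unfolding Q_def[abs_def] by (rule bounded_bilinear.has_vector_derivative[OF bounded_bilinear_inner xdder xdder])
  moreover have "xd r \<bullet> ((d r / 2) *\<^sub>R g (x r)) + ((d r / 2) *\<^sub>R g (x r)) \<bullet> xd r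
      = (fst (g (x r)) * fst (xd r) + snd (g (x r)) * snd (xd r)) * d r"
    by (cases "xd r"; cases "g (x r)") (simp add: algebra_simps)
  ultimately show ?thesis by (simp add: has_real_derivative_iff_has_vector_derivative)
qed

lemma Q_eq: "Q s = (norm (xd s))\<^sup>2" unfolding Q_def by (simp add: power2_norm_eq_inner)

lemma w_est:
  "\<bar>oint (-e) U (\<lambda>s. oint (-e) s (\<lambda>r. (fst (g (x r)) * fst (xd r) + snd (g (x r)) * snd (xd r)) * d r))
     - (norm h)\<^sup>2 * max U 0\<bar> \<le> 3 * e * B\<^sup>2 + \<bar>U\<bar> * (norm (xd e - h) * (2 * B + norm (xd e - h)))"
proof -
  have Qm: "Q (-e) = 0" unfolding Q_def using xd_left[of "-e"] by simp
  have inner: "(\<lambda>s. oint (-e) s (\<lambda>r. (fst (g (x r)) * fst (xd r) + snd (g (x r)) * snd (xd r)) * d r)) = Q"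
    using oint_ftc[OF Q_deriv] Qm by auto
  have cQ: "continuous_on UNIV Q" unfolding Q_def[abs_def] by (intro continuous_intros cxd)
  have QR: "\<bar>Q s\<bar> \<le> B\<^sup>2" for s
    unfolding Q_eq using xd_bound[of s] by (simp add: power_mono)
  have a: "\<bar>oint (-e) U Q - Q e * max U 0\<bar> \<le> 2 * e * B\<^sup>2 + e * \<bar>Q e\<bar>"
  proof (rule oint_est[OF cQ epos _ _ QR])
    fix s :: real assume "s \<le> -e" thus "Q s = 0" unfolding Q_def using xd_left by simp
  next
    fix s :: real assume "e \<le> s" hence "xd s = xd e" by (rule xd_right)
    thus "Q s = Q e" unfolding Q_def by simp
  qed
  have a2: "e * \<bar>Q e\<bar> \<le> e * B\<^sup>2" using QR[of e] epos by (intro mult_left_mono) auto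
  have qd: "\<bar>Q e - (norm h)\<^sup>2\<bar> \<le> norm (xd e - h) * (2 * B + norm (xd e - h))"
  proof -
    have "Q e - (norm h)\<^sup>2 = (norm (xd e) - norm h) * (norm (xd e) + norm h)"
      unfolding Q_eq by (simp add: power2_eq_square algebra_simps)
    hence "\<bar>Q e - (norm h)\<^sup>2\<bar> = \<bar>norm (xd e) - norm h\<bar> * (norm (xd e) + norm h)"
      by (simp add: abs_mult)
    also have "\<dots> \<le> norm (xd e - h) * (2 * B + norm (xd e - h))"
    proof (rule mult_mono)
      show "\<bar>norm (xd e) - norm h\<bar> \<le> norm (xd e - h)" by (rule norm_triangle_ineq3)
      have "norm h \<le> B + norm (xd e - h)"
        using xd_bound[of e] norm_triangle_ineq4[of "xd e" "xd e - h"] by simp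
      thus "norm (xd e) + norm h \<le> 2 * B + norm (xd e - h)" using xd_bound[of e] by simp
    qed auto
    finally show ?thesis .
  qed
  have b: "\<bar>Q e * max U 0 - (norm h)\<^sup>2 * max U 0\<bar> \<le> \<bar>U\<bar> * (norm (xd e - h) * (2 * B + norm (xd e - h)))"
  proof -
    have "\<bar>Q e * max U 0 - (norm h)\<^sup>2 * max U 0\<bar> = \<bar>Q e - (norm h)\<^sup>2\<bar> * max U 0"
      by (simp add: left_diff_distrib[symmetric] abs_mult)
    also have "\<dots> \<le> norm (xd e - h) * (2 * B + norm (xd e - h)) * \<bar>U\<bar>"
      by (rule mult_mono[OF qd]) (use Bnn in auto)
    finally show ?thesis by (simp add: mult_ac)
  qed
  show ?thesis unfolding inner using a a2 b by linarith
qed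

end


lemma dist4:
  fixes U a1 a2 w b1 b2 v :: real
  shows "dist (U, a1, a2, w) (U, b1, b2, v) \<le> norm ((a1, a2) - (b1, b2)) + \<bar>w - v\<bar>"
proof -
  have "dist (U, a1, a2, w) (U, b1, b2, v) = sqrt (((a1-b1)\<^sup>2 + (a2-b2)\<^sup>2) + (w-v)\<^sup>2)"
    by (simp add: dist_Pair_Pair dist_real_def add.assoc)
  also have "\<dots> \<le> sqrt ((a1-b1)\<^sup>2 + (a2-b2)\<^sup>2) + sqrt ((w-v)\<^sup>2)"
    by (rule sqrt_add_le_add_sqrt) auto
  also have "\<dots> = norm ((a1, a2) - (b1, b2)) + \<bar>w - v\<bar>"
    by (simp add: norm_Pair)
  finally show ?thesis .
qed

lemma aux1: "0 \<le> (a::real) \<Longrightarrow> 0 \<le> t \<Longrightarrow> t < c / (a + 1) \<Longrightarrow> t * a < c"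
proof -
  assume h: "0 \<le> a" "0 \<le> t" "t < c / (a + 1)"
  hence "t * (a + 1) < c" by (simp add: pos_less_divide_eq)
  moreover have "t * a \<le> t * (a + 1)" using h by (intro mult_left_mono) auto
  ultimately show ?thesis by linarith
qed

lemma aux2: "0 \<le> (a::real) \<Longrightarrow> 0 < t \<Longrightarrow> t \<le> c / (a + 1) \<Longrightarrow> t * a < c"
proof -
  assume h: "0 \<le> a" "0 < t" "t \<le> c / (a + 1)"
  hence "t * (a + 1) \<le> c" by (simp add: pos_le_divide_eq)
  thus ?thesis using h by (simp add: algebra_simps)
qed

lemma aux3: "0 \<le> (a::real) \<Longrightarrow> 0 \<le> c \<Longrightarrow> a * (c / (a + 1)) \<le> c"
proof -
  assume h: "0 \<le> a" "0 \<le> c"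
  have "a * (c / (a + 1)) = c * (a / (a + 1))" by simp
  also have "\<dots> \<le> c * 1" using h by (intro mult_left_mono) auto
  finally show ?thesis by simp
qed

theorem proposition7p3:
  fixes f :: "real \<times> real \<Rightarrow> real"
    and \<delta> :: "real \<Rightarrow> real \<Rightarrow> real"
    and x :: "real \<Rightarrow> real \<times> real \<Rightarrow> real \<Rightarrow> real \<times> real"
  assumes f_smooth: "smooth f"
    and delta: "strict_delta_net \<delta>"
    and x_smooth: "\<forall>\<epsilon>\<in>{0<..1}. smooth (\<lambda>(X, U). x \<epsilon> X U)"
    and x_ode: "\<forall>K. compact K \<longrightarrow> (\<exists>\<epsilon>K>0. \<forall>X\<in>K. \<forall>\<epsilon>\<in>{0<..1}. \<epsilon> \<le> \<epsilon>K \<longrightarrow>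
        (\<exists>xd :: real \<Rightarrow> real \<times> real.
           (\<forall>U. (x \<epsilon> X has_vector_derivative xd U) (at U)) \<and>
           (\<forall>U. (xd has_vector_derivative
                   (1/2 * partial1 f (x \<epsilon> X U) * \<delta> \<epsilon> U,
                    1/2 * partial2 f (x \<epsilon> X U) * \<delta> \<epsilon> U)) (at U)) \<and>
           x \<epsilon> X (-1) = X \<and> xd (-1) = 0))"
  shows "\<forall>K. compact K \<longrightarrow> uniform_limit K (s_eps f \<delta> x) (s_lim f) (at_right 0)"
proof (intro allI impI)
  fix K :: "(real \<times> real \<times> real \<times> real) set" assume K: "compact K"
  define g where "g = (\<lambda>y. (partial1 f y, partial2 f y))"
  have gcont: "continuous_on UNIV g" unfolding g_def by (rule smooth_partials_cont[OF f_smooth])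
  define K' where "K' = (\<lambda>p. (fst (snd p), fst (snd (snd p)))) ` K"
  have K'c: "compact K'" unfolding K'_def by (intro compact_continuous_image continuous_intros K)
  obtain A where A: "\<forall>p\<in>K. \<bar>fst p\<bar> \<le> A" "0 \<le> A"
  proof -
    have "bounded (fst ` K)" by (intro compact_imp_bounded compact_continuous_image continuous_intros K)
    then obtain A0 where "\<forall>y\<in>fst ` K. norm y \<le> A0" by (auto simp: bounded_iff)
    thus ?thesis using that[of "max A0 0"] by fastforce
  qed
  obtain \<epsilon>K where \<epsilon>K: "\<epsilon>K > 0" and ode: "\<forall>X\<in>K'. \<forall>\<epsilon>\<in>{0<..1}. \<epsilon> \<le> \<epsilon>K \<longrightarrow>
        (\<exists>xd :: real \<Rightarrow> real \<times> real.
           (\<forall>U. (x \<epsilon> X has_vector_derivative xd U) (at U)) \<and>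
           (\<forall>U. (xd has_vector_derivative
                   (1/2 * partial1 f (x \<epsilon> X U) * \<delta> \<epsilon> U,
                    1/2 * partial2 f (x \<epsilon> X U) * \<delta> \<epsilon> U)) (at U)) \<and>
           x \<epsilon> X (-1) = X \<and> xd (-1) = 0)"
    using x_ode K'c by blast
  define N where "N = {a + b | a b. a \<in> K' \<and> b \<in> cball (0::real\<times>real) 1}"
  have Nc: "compact N" unfolding N_def by (rule compact_sums[OF K'c compact_cball])
  have inN: "y \<in> N" if "X \<in> K'" "dist y X \<le> 1" for X y
  proof -
    have "y = X + (y - X)" by simp
    moreover have "y - X \<in> cball 0 1" using that(2) by (simp add: dist_norm norm_minus_commute)
    ultimately show ?thesis unfolding N_def using that(1) by blast
  qed
  obtain M where M: "0 \<le> M" "\<And>y. y \<in> N \<Longrightarrow> norm (g y) \<le> M"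
  proof -
    have "bounded (g ` N)"
      by (intro compact_imp_bounded compact_continuous_image continuous_on_subset[OF gcont] Nc) auto
    then obtain M0 where "\<forall>z\<in>g ` N. norm z \<le> M0" by (auto simp: bounded_iff)
    thus ?thesis using that[of "max M0 0"] by fastforce
  qed
  obtain C where C: "C > 0" "eventually (\<lambda>\<epsilon>. integral {-\<epsilon>..\<epsilon>} (\<lambda>u. \<bar>\<delta> \<epsilon> u\<bar>) \<le> C) (at_right 0)"
    using delta unfolding strict_delta_net_def by blast
  have Itend: "((\<lambda>\<epsilon>. integral {-\<epsilon>..\<epsilon>} (\<delta> \<epsilon>)) \<longlongrightarrow> 1) (at_right 0)"
    using delta unfolding strict_delta_net_def by blast
  have dprops: "smooth (\<delta> \<epsilon>) \<and> (\<forall>u. \<delta> \<epsilon> u \<noteq> 0 \<longrightarrow> u \<in> {-\<epsilon>..\<epsilon>})" if "\<epsilon> \<in> {0<..1}" for \<epsilon>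
    using delta that unfolding strict_delta_net_def by blast
  have uc: "uniformly_continuous_on N g"
    by (rule compact_uniformly_continuous[OF continuous_on_subset[OF gcont] Nc]) auto
  define B where "B = M * C / 2"
  have B0: "0 \<le> B" unfolding B_def using M C by simp
  show "uniform_limit K (s_eps f \<delta> x) (s_lim f) (at_right 0)"
    unfolding uniform_limit_iff
  proof (intro allI impI)
    fix e0 :: real assume e0: "0 < e0"
    define D0 where "D0 = min 1 ((e0 / 2) / (A * (2 * B + 2) + 1))"
    have D0: "0 < D0" "D0 \<le> 1" "A * (2 * B + 2) * D0 \<le> e0 / 2"
    proof -
      have p: "0 \<le> A * (2 * B + 2)" using A B0 by simp
      show "0 < D0" unfolding D0_def using e0 p by simp
      show "D0 \<le> 1" unfolding D0_def by simp
      have "A * (2 * B + 2) * D0 \<le> A * (2 * B + 2) * ((e0 / 2) / (A * (2 * B + 2) + 1))"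
        unfolding D0_def using p by (intro mult_left_mono) auto
      also have "\<dots> \<le> e0 / 2" by (rule aux3[OF p]) (use e0 in simp)
      finally show "A * (2 * B + 2) * D0 \<le> e0 / 2" .
    qed
    define \<eta> where "\<eta> = D0 / (C + 1)"
    have \<eta>0: "0 < \<eta>" using D0 C unfolding \<eta>_def by simp
    have \<eta>: "0 < \<eta>" "\<eta> * C < D0"
      using \<eta>0 apply simp
      by (rule aux2) (use C \<eta>0 in \<open>auto simp: \<eta>_def\<close>)
    obtain dd where dd: "dd > 0" "\<forall>y\<in>N. \<forall>z\<in>N. dist z y < dd \<longrightarrow> dist (g z) (g y) < \<eta>"
      using uc[unfolded uniformly_continuous_on_def] \<eta>(1) by blast
    have evI: "eventually (\<lambda>\<epsilon>. dist (integral {-\<epsilon>..\<epsilon>} (\<delta> \<epsilon>)) 1 < D0 / (M + 1)) (at_right 0)"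
      by (rule tendstoD[OF Itend]) (use D0 M in simp)
    define \<epsilon>0 where "\<epsilon>0 = min (min 1 \<epsilon>K) (min (1 / (M * C + 1))
        (min (dd / (2 * B + 1)) ((e0 / 2) / ((3 * B + 3 * B\<^sup>2) + 1))))"
    have \<epsilon>0: "0 < \<epsilon>0" unfolding \<epsilon>0_def using \<epsilon>K M C dd e0 B0 by (simp add: add_nonneg_pos)
    have evS: "eventually (\<lambda>\<epsilon>. \<epsilon> < \<epsilon>0) (at_right 0)"
      unfolding eventually_at_right_field using \<epsilon>0 by blast
    have evP: "eventually (\<lambda>\<epsilon>. 0 < \<epsilon>) (at_right (0::real))" by (rule eventually_at_right_less)
    from evI C(2) evS evP
    show "eventually (\<lambda>\<epsilon>. \<forall>p\<in>K. dist (s_eps f \<delta> x \<epsilon> p) (s_lim f p) < e0) (at_right 0)"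
    proof eventually_elim
      case (elim \<epsilon>)
      hence Iclose: "\<bar>integral {-\<epsilon>..\<epsilon>} (\<delta> \<epsilon>) - 1\<bar> < D0 / (M + 1)"
        and dC: "integral {-\<epsilon>..\<epsilon>} (\<lambda>u. \<bar>\<delta> \<epsilon> u\<bar>) \<le> C"
        and el: "\<epsilon> < \<epsilon>0" and ep: "0 < \<epsilon>"
        by (auto simp: dist_real_def)
      have e1: "\<epsilon> \<le> 1" "\<epsilon> \<le> \<epsilon>K" using el unfolding \<epsilon>0_def by auto
      have small: "\<epsilon> * (M * C) < 1"
        by (rule aux1) (use M C ep el in \<open>auto simp: \<epsilon>0_def\<close>)
      have small2: "\<epsilon> * (2 * B) < dd"
        by (rule aux1) (use B0 ep el in \<open>auto simp: \<epsilon>0_def\<close>)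
      have small3: "\<epsilon> * (3 * B + 3 * B\<^sup>2) < e0 / 2"
        by (rule aux1) (use B0 ep el in \<open>auto simp: \<epsilon>0_def\<close>)
      have dpe: "smooth (\<delta> \<epsilon>)" "\<forall>u. \<delta> \<epsilon> u \<noteq> 0 \<longrightarrow> u \<in> {-\<epsilon>..\<epsilon>}" using dprops[of \<epsilon>] ep e1 by auto
      show "\<forall>p\<in>K. dist (s_eps f \<delta> x \<epsilon> p) (s_lim f p) < e0"
      proof
        fix p assume p: "p \<in> K"
        obtain U X1 X2 V where pe: "p = (U, X1, X2, V)" by (cases p) auto
        define X where "X = (X1, X2)"
        have XK': "X \<in> K'" using p pe unfolding K'_def X_def by force
        have UA: "\<bar>U\<bar> \<le> A" using A p pe by force
        obtain xd where xd: "\<forall>U. (x \<epsilon> X has_vector_derivative xd U) (at U)"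
          "\<forall>U. (xd has_vector_derivative
                   (1/2 * partial1 f (x \<epsilon> X U) * \<delta> \<epsilon> U,
                    1/2 * partial2 f (x \<epsilon> X U) * \<delta> \<epsilon> U)) (at U)"
          "x \<epsilon> X (-1) = X" "xd (-1) = 0"
          using ode XK' ep e1 by force
        have gM: "norm (g y) \<le> M" if "dist y X \<le> 1" for y using M(2)[OF inN[OF XK' that]] .
        interpret o: odeset "x \<epsilon> X" xd "\<delta> \<epsilon>" g X \<epsilon> M C
        proof
          show "\<And>U. (x \<epsilon> X has_vector_derivative xd U) (at U)" using xd(1) by blast
          show "\<And>U. (xd has_vector_derivative (\<delta> \<epsilon> U / 2) *\<^sub>R g (x \<epsilon> X U)) (at U)"
          proof -
            fix U
            have "(1/2 * partial1 f (x \<epsilon> X U) * \<delta> \<epsilon> U, 1/2 * partial2 f (x \<epsilon> X U) * \<delta> \<epsilon> U)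
                = (\<delta> \<epsilon> U / 2) *\<^sub>R g (x \<epsilon> X U)" by (simp add: g_def)
            thus "(xd has_vector_derivative (\<delta> \<epsilon> U / 2) *\<^sub>R g (x \<epsilon> X U)) (at U)"
              using xd(2) by metis
          qed
          show "x \<epsilon> X (-1) = X" "xd (-1) = 0" by (fact xd(3)) (fact xd(4))
          show "0 < \<epsilon>" "\<epsilon> \<le> 1" using ep e1 by auto
          show "\<And>u. \<delta> \<epsilon> u \<noteq> 0 \<Longrightarrow> u \<in> {-\<epsilon>..\<epsilon>}" using dpe by blast
          show "continuous_on UNIV (\<delta> \<epsilon>)" by (rule smooth_cont[OF dpe(1)])
          show "continuous_on UNIV g" by (fact gcont)
          show "\<And>y. dist y X \<le> 1 \<Longrightarrow> norm (g y) \<le> M" by (fact gM)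
          show "integral {-\<epsilon>..\<epsilon>} (\<lambda>u. \<bar>\<delta> \<epsilon> u\<bar>) \<le> C" by (fact dC)
          show "\<epsilon> * M * C < 1" using small by (simp add: mult.assoc)
        qed
        have oB: "o.B = B" unfolding o.B_def B_def ..
        define I where "I = integral {-\<epsilon>..\<epsilon>} (\<delta> \<epsilon>)"
        define h where "h = (1/2::real) *\<^sub>R g X"
        have XN: "X \<in> N" using inN[OF XK'] by simp
        have close: "norm (xd \<epsilon> - (I / 2) *\<^sub>R g X) \<le> \<eta> / 2 * C"
          unfolding I_def
        proof (rule o.xd_e_close)
          fix y assume y: "dist y X \<le> 2 * \<epsilon> * o.B"
          hence "dist y X < dd" using small2 oB by (simp add: mult_ac)
          moreover have "dist y X \<le> 1" using y small oB unfolding B_def by (simp add: mult_ac)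
          hence "y \<in> N" using inN[OF XK'] by blast
          ultimately have "dist (g y) (g X) < \<eta>" using dd(2) XN by blast
          thus "norm (g y - g X) \<le> \<eta>" by (simp add: dist_norm)
        qed
        have Dlt: "norm (xd \<epsilon> - h) < D0"
        proof -
          have "xd \<epsilon> - h = (xd \<epsilon> - (I / 2) *\<^sub>R g X) + ((I / 2) *\<^sub>R g X - h)" by simp
          hence "norm (xd \<epsilon> - h) \<le> norm (xd \<epsilon> - (I / 2) *\<^sub>R g X) + norm ((I / 2) *\<^sub>R g X - h)"
            by (metis norm_triangle_ineq)
          moreover have "(I / 2) *\<^sub>R g X - h = ((I - 1) / 2) *\<^sub>R g X"
            unfolding h_def by (simp add: algebra_simps diff_divide_distrib)
          hence "norm ((I / 2) *\<^sub>R g X - h) = \<bar>I - 1\<bar> / 2 * norm (g X)" by simp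
          moreover have "\<bar>I - 1\<bar> * norm (g X) \<le> \<bar>I - 1\<bar> * M" using M(2)[OF XN] by (intro mult_left_mono) auto
          moreover have "\<bar>I - 1\<bar> * M < D0" by (rule aux1) (use M Iclose in \<open>auto simp: I_def\<close>)
          ultimately show ?thesis using close \<eta>(2) by (simp add: field_simps)
        qed
        have xe: "norm (x \<epsilon> X U - (X + max U 0 *\<^sub>R h)) \<le> 3 * \<epsilon> * B + \<bar>U\<bar> * norm (xd \<epsilon> - h)"
          using o.x_est oB by simp
        have we: "\<bar>oint (-\<epsilon>) U (\<lambda>s. oint (-\<epsilon>) s (\<lambda>r. (fst (g (x \<epsilon> X r)) * fst (xd r) + snd (g (x \<epsilon> X r)) * snd (xd r)) * \<delta> \<epsilon> r))
           - (norm h)\<^sup>2 * max U 0\<bar> \<le> 3 * \<epsilon> * B\<^sup>2 + \<bar>U\<bar> * (norm (xd \<epsilon> - h) * (2 * B + norm (xd \<epsilon> - h)))"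
          using o.w_est oB by simp
        have vd: "vector_derivative (x \<epsilon> X) (at r) = xd r" for r
          using xd(1) vector_derivative_at by blast
        have seq: "s_eps f \<delta> x \<epsilon> p = (U, fst (x \<epsilon> X U), snd (x \<epsilon> X U),
            V + oint (-\<epsilon>) U (\<lambda>s. oint (-\<epsilon>) s (\<lambda>r. (fst (g (x \<epsilon> X r)) * fst (xd r) + snd (g (x \<epsilon> X r)) * snd (xd r)) * \<delta> \<epsilon> r)))"
          using vd unfolding s_eps_def w_eps_def pe by (simp add: g_def X_def)
        have hn: "(norm h)\<^sup>2 = 1/4 * ((partial1 f X)\<^sup>2 + (partial2 f X)\<^sup>2)"
          unfolding h_def g_def by (simp add: norm_Pair power_mult_distrib power2_eq_square)
        have leq: "s_lim f p = (U, fst (X + max U 0 *\<^sub>R h), snd (X + max U 0 *\<^sub>R h), V + (norm h)\<^sup>2 * max U 0)"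
          unfolding s_lim_def pe hn unfolding h_def g_def X_def by (simp add: algebra_simps)
        have "dist (s_eps f \<delta> x \<epsilon> p) (s_lim f p) \<le> norm (x \<epsilon> X U - (X + max U 0 *\<^sub>R h))
            + \<bar>oint (-\<epsilon>) U (\<lambda>s. oint (-\<epsilon>) s (\<lambda>r. (fst (g (x \<epsilon> X r)) * fst (xd r) + snd (g (x \<epsilon> X r)) * snd (xd r)) * \<delta> \<epsilon> r))
           - (norm h)\<^sup>2 * max U 0\<bar>"
        proof -
          have d4: "dist (U, fst a, snd a, V + P) (U, fst b, snd b, V + Q) \<le> norm (a - b) + \<bar>P - Q\<bar>"
            for a b :: "real \<times> real" and P Q :: real
            using dist4[of U "fst a" "snd a" "V + P" "fst b" "snd b" "V + Q"] by simp
          show ?thesis unfolding seq leq by (rule d4)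
        qed
        also have "\<dots> \<le> (3 * \<epsilon> * B + \<bar>U\<bar> * norm (xd \<epsilon> - h)) + (3 * \<epsilon> * B\<^sup>2 + \<bar>U\<bar> * (norm (xd \<epsilon> - h) * (2 * B + norm (xd \<epsilon> - h))))"
          using xe we by linarith
        also have "\<dots> \<le> \<epsilon> * (3 * B + 3 * B\<^sup>2) + A * (2 * B + 2) * D0"
        proof -
          have a: "\<bar>U\<bar> * norm (xd \<epsilon> - h) \<le> A * D0" using UA Dlt by (intro mult_mono) auto
          have b: "norm (xd \<epsilon> - h) * (2 * B + norm (xd \<epsilon> - h)) \<le> D0 * (2 * B + 1)"
            using Dlt D0 B0 by (intro mult_mono) auto
          have c: "\<bar>U\<bar> * (norm (xd \<epsilon> - h) * (2 * B + norm (xd \<epsilon> - h))) \<le> A * (D0 * (2 * B + 1))"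
            by (rule mult_mono[OF UA b]) (use A B0 in auto)
          show ?thesis using a c by (simp add: algebra_simps)
        qed
        also have "\<dots> < e0" using small3 D0(3) by linarith
        finally show "dist (s_eps f \<delta> x \<epsilon> p) (s_lim f p) < e0" .
      qed
    qed
  qed
qed


end
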